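(* The estimate of $\Theta$ returned by the BAGUS algorithm (described in the context) is always symmetric, and it is also positive definite if the initial value $\Theta^{(0)}$ is positive definite.
   Context: BAGUS algorithm. Input: sample covariance $S=[s_{ij}]$ ($p\times p$), sample size $n$, hyperparameters $0<v_0<v_1$, $\eta\in(0,1)$, $\tau>0$, $B>0$, and an initial symmetric matrix $\Theta^{(0)}$ (the paper uses $\Theta^{(0)}=I$), with $W$ initialized as $W=(\Theta^{(0)})^{-1}$ (so $W=I$ when $\Theta^{(0)}=I$); throughout, $W$ is maintained equal to $\Theta^{-1}$. Repeat until convergence: (E-step) for all $i\ne j$ set $p_{ij}$ by $\log\frac{p_{ij}}{1-p_{ij}}=\log\frac{v_0}{v_1}+\log\frac{\eta}{1-\eta}-\frac{|\theta_{ij}|}{v_1}+\frac{|\theta_{ij}|}{v_0}$, using the current $\Theta$. (M-step) for $j=1,\dots,p$: partition $\Theta$ (and likewise $W,S,P=[p_{ij}]$) by moving row and column $j$ to the end: $\Theta_{11}$ is $\Theta$ with row and column $j$ deleted, $\theta_{12}$ is column $j$ without its $j$-th entry, $\theta_{22}=\theta_{jj}$, and similarly $W_{11},w_{12},w_{22}$, $s_{12},s_{22}$, $P_{12}$. Set $w_{22}\leftarrow s_{22}+\frac2n\tau$. Compute $\Theta_{11}^{-1}=W_{11}-w_{12}w_{12}^T/w_{22}$ (the inverse of the current $\Theta_{11}$). Update $\theta_{12}$ by cyclic coordinate descent: for each coordinate $k$, solve for $(\theta_{12})_k$ the equation $n s_{12}+nw_{22}\Theta_{11}^{-1}\theta_{12}+\big(\frac1{v_1}P_{12}+\frac1{v_0}(1-P_{12})\big)\odot\mathrm{sign}(\theta_{12})=0$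 in coordinate $k$ with the other coordinates fixed, repeating until convergence; if the resulting matrix has spectral norm exceeding $B$, keep the previous $\theta_{12}$ instead. Then set $\theta_{22}\leftarrow\frac1{w_{22}}+\theta_{12}^T\Theta_{11}^{-1}\theta_{12}$, place $\theta_{12}$ in both column $j$ and row $j$ of $\Theta$, and update $W_{11},w_{12}$ so that $W=\Theta^{-1}$ via $W_{11}=\Theta_{11}^{-1}+\frac{\Theta_{11}^{-1}\theta_{12}\theta_{12}^T\Theta_{11}^{-1}}{\theta_{22}-\theta_{12}^T\Theta_{11}^{-1}\theta_{12}}$, $w_{12}=-\frac{\Theta_{11}^{-1}\theta_{12}}{\theta_{22}-\theta_{12}^T\Theta_{11}^{-1}\theta_{12}}$. Output: $\Theta$ and $P$. Here $\odot$ is entrywise multiplication and $\mathrm{sign}$ is applied entrywise. *)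

theory Defs
  imports "HOL-Analysis.Analysis"
begin

text \<open>Matrices are real p x p matrices with entries A \$ i \$ j (row i, column j); the
index type 'n is finite and linearly ordered (the order fixes the cyclic sweep order).\<close>

definition sym_mat :: "real^'n^'n \<Rightarrow> bool" where
  "sym_mat A \<longleftrightarrow> transpose A = A"

definition pos_def_mat :: "real^'n^'n \<Rightarrow> bool" where
  "pos_def_mat A \<longleftrightarrow> transpose A = A \<and> (\<forall>x. x \<noteq> 0 \<longrightarrow> x \<bullet> (A *v x) > 0)"

definition pos_semidef_mat :: "real^'n^'n \<Rightarrow> bool" where
  "pos_semidef_mat A \<longleftrightarrow> transpose A = A \<and> (\<forall>x. x \<bullet> (A *v x) \<ge> 0)"

definition spec_norm :: "real^'n^'n \<Rightarrow> real" where
  "spec_norm A = onorm (\<lambda>x. A *v x)"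

text \<open>E-step: p_ij determined by its log-odds (used only for i \<noteq> j).\<close>
definition bagus_estep :: "real \<Rightarrow> real \<Rightarrow> real \<Rightarrow> real^'n^'n \<Rightarrow> 'n \<Rightarrow> 'n \<Rightarrow> real" where
  "bagus_estep v0 v1 eta Th i j =
     (let L = ln (v0 / v1) + ln (eta / (1 - eta)) - \<bar>Th $ i $ j\<bar> / v1 + \<bar>Th $ i $ j\<bar> / v0
      in exp L / (1 + exp L))"

text \<open>sign, read as the subdifferential of the absolute value (sign 0 ranges over [-1,1]).\<close>
definition sign_sub :: "real \<Rightarrow> real \<Rightarrow> bool" where
  "sign_sub x g \<longleftrightarrow> (x > 0 \<longrightarrow> g = 1) \<and> (x < 0 \<longrightarrow> g = -1) \<and> (x = 0 \<longrightarrow> -1 \<le> g \<and> g \<le> 1)"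

text \<open>A k l stands for the (k,l) entry of Theta11 inverse, c k for the penalty weight,
  beta for the current theta12 (entries indexed by k \<noteq> j).\<close>
definition bagus_coord ::
  "real \<Rightarrow> real^'n^'n \<Rightarrow> real \<Rightarrow> ('n \<Rightarrow> 'n \<Rightarrow> real) \<Rightarrow> ('n \<Rightarrow> real) \<Rightarrow> 'n \<Rightarrow> 'n
     \<Rightarrow> ('n \<Rightarrow> real) \<Rightarrow> ('n \<Rightarrow> real)" where
  "bagus_coord nn S w22 A c j k beta =
     beta(k := (SOME x. \<exists>g. sign_sub x g \<and>
        nn * S $ k $ j + nn * w22 * (\<Sum>l\<in>UNIV - {j}. A k l * (beta(k := x)) l) + c k * g = 0))"

definition bagus_sweep ::
  "real \<Rightarrow> ((real,'n::{finite,linorder}) vec,'n) vec \<Rightarrow> real \<Rightarrow> ('n \<Rightarrow> 'n \<Rightarrow> real) \<Rightarrow> ('n \<Rightarrow> real) \<Rightarrow> 'n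
     \<Rightarrow> ('n \<Rightarrow> real) \<Rightarrow> ('n \<Rightarrow> real)" where
  "bagus_sweep nn S w22 A c j beta =
     fold (bagus_coord nn S w22 A c j) (sorted_list_of_set (UNIV - {j})) beta"

definition bagus_col_update ::
  "real \<Rightarrow> ((real,'n::{finite,linorder}) vec,'n) vec \<Rightarrow> real \<Rightarrow> real \<Rightarrow> real \<Rightarrow> real \<Rightarrow> ('n \<Rightarrow> 'n \<Rightarrow> real)
     \<Rightarrow> nat \<Rightarrow> 'n \<Rightarrow> ((real,'n) vec,'n) vec \<times> ((real,'n) vec,'n) vec \<Rightarrow> ((real,'n) vec,'n) vec \<times> ((real,'n) vec,'n) vec" where
  "bagus_col_update nn S tau v0 v1 B P m j st =
    (let Th = fst st; W = snd st;
         w22 = S $ j $ j + 2 / nn * tau;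
         A = (\<lambda>k l. W $ k $ l - W $ k $ j * W $ l $ j / W $ j $ j);
         c = (\<lambda>k. P k j / v1 + (1 - P k j) / v0);
         beta0 = (\<lambda>k. Th $ k $ j);
         beta1 = (bagus_sweep nn S w22 A c j ^^ m) beta0;
         Thc = (\<chi> a b. if a = j \<and> b \<noteq> j then beta1 b
                        else if b = j \<and> a \<noteq> j then beta1 a else Th $ a $ b);
         beta = (if spec_norm Thc > B then beta0 else beta1);
         q = (\<Sum>k\<in>UNIV - {j}. \<Sum>l\<in>UNIV - {j}. beta k * A k l * beta l);
         th22 = 1 / w22 + q;
         Th' = (\<chi> a b. if a = j \<and> b = j then th22 else if a = j then beta b
                        else if b = j then beta a else Th $ a $ b);
         Abeta = (\<lambda>k. \<Sum>l\<in>UNIV - {j}. A k l * beta l);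
         d = th22 - q;
         W' = (\<chi> a b. if a = j \<and> b = j then w22 else if a = j then - Abeta b / d
                       else if b = j then - Abeta a / d else A a b + Abeta a * Abeta b / d)
     in (Th', W'))"

text \<open>One EM iteration (E-step, then M-step over columns j in increasing order);
  sw j is the number of coordinate-descent sweeps used for column j.\<close>
definition bagus_iter ::
  "nat \<Rightarrow> ((real,'n::{finite,linorder}) vec,'n) vec \<Rightarrow> real \<Rightarrow> real \<Rightarrow> real \<Rightarrow> real \<Rightarrow> real
     \<Rightarrow> ('n \<Rightarrow> nat) \<Rightarrow> ((real,'n) vec,'n) vec \<times> ((real,'n) vec,'n) vec \<Rightarrow> ((real,'n) vec,'n) vec \<times> ((real,'n) vec,'n) vec" where
  "bagus_iter n S v0 v1 eta tau B sw st =
     (let P = bagus_estep v0 v1 eta (fst st)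
      in fold (\<lambda>j. bagus_col_update (real n) S tau v0 v1 B P (sw j) j)
              (sorted_list_of_set UNIV) st)"

text \<open>State after T EM iterations; sweeps t j = number of inner sweeps in iteration t, column j.\<close>
primrec bagus_run ::
  "nat \<Rightarrow> ((real,'n::{finite,linorder}) vec,'n) vec \<Rightarrow> real \<Rightarrow> real \<Rightarrow> real \<Rightarrow> real \<Rightarrow> real \<Rightarrow> ((real,'n) vec,'n) vec
     \<Rightarrow> (nat \<Rightarrow> 'n \<Rightarrow> nat) \<Rightarrow> nat \<Rightarrow> ((real,'n) vec,'n) vec \<times> ((real,'n) vec,'n) vec" where
  "bagus_run n S v0 v1 eta tau B Th0 sweeps 0 = (Th0, matrix_inv Th0)"
| "bagus_run n S v0 v1 eta tau B Th0 sweeps (Suc t) =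
     bagus_iter n S v0 v1 eta tau B (sweeps t) (bagus_run n S v0 v1 eta tau B Th0 sweeps t)"

definition bagus_Theta ::
  "nat \<Rightarrow> ((real,'n::{finite,linorder}) vec,'n) vec \<Rightarrow> real \<Rightarrow> real \<Rightarrow> real \<Rightarrow> real \<Rightarrow> real \<Rightarrow> ((real,'n) vec,'n) vec
     \<Rightarrow> (nat \<Rightarrow> 'n \<Rightarrow> nat) \<Rightarrow> nat \<Rightarrow> ((real,'n) vec,'n) vec" where
  "bagus_Theta n S v0 v1 eta tau B Th0 sweeps T = fst (bagus_run n S v0 v1 eta tau B Th0 sweeps T)"

end

theory Submission
  imports Defs
begin

lemma split_j: "sum f (UNIV::'n::finite set) = f j + sum f (UNIV - {j})"
  by (simp add: sum.remove)

lemma qf: "(x::real^'n) \<bullet> (M *v x) = (\<Sum>a\<in>UNIV. \<Sum>b\<in>UNIV. x$a * M$a$b * x$b)"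
  by (simp add: inner_vec_def matrix_vector_mult_def sum_distrib_left mult.assoc)

lemma mm_entry: "((M::real^'n^'n) ** N)$a$b = (\<Sum>m\<in>UNIV. M$a$m * N$m$b)"
  by (simp add: matrix_matrix_mult_def)

lemma core:
  fixes Th W :: "real^'n::finite^'n" and j :: 'n and beta :: "'n \<Rightarrow> real" and w22 :: real
  assumes pd: "pos_def_mat Th" and inv: "Th ** W = mat 1" and w: "w22 > 0"
  defines "A \<equiv> (\<lambda>k l. W $ k $ l - W $ k $ j * W $ l $ j / W $ j $ j)"
  defines "q \<equiv> (\<Sum>k\<in>UNIV - {j}. \<Sum>l\<in>UNIV - {j}. beta k * A k l * beta l)"
  defines "th22 \<equiv> 1 / w22 + q"
  defines "Th' \<equiv> (\<chi> a b. if a = j \<and> b = j then th22 else if a = j then beta b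
                        else if b = j then beta a else Th $ a $ b)"
  defines "Abeta \<equiv> (\<lambda>k. \<Sum>l\<in>UNIV - {j}. A k l * beta l)"
  defines "d \<equiv> th22 - q"
  defines "W' \<equiv> (\<chi> a b. if a = j \<and> b = j then w22 else if a = j then - Abeta b / d
                       else if b = j then - Abeta a / d else A a b + Abeta a * Abeta b / d)"
  shows "pos_def_mat Th' \<and> Th' ** W' = mat 1"
proof -
  let ?R = "UNIV - {j}"
  have ThT: "transpose Th = Th" using pd by (simp add: pos_def_mat_def)
  have Thsym: "Th$a$b = Th$b$a" for a b
    using ThT by (metis transpose_def vec_lambda_beta)
  have "transpose W ** Th = mat 1"
    using arg_cong[OF inv, of transpose] ThT by (simp add: matrix_transpose_mul)
  hence "transpose W = W"
    by (metis inv matrix_mul_assoc matrix_mul_lid matrix_mul_rid)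
  hence Wsym: "W$a$b = W$b$a" for a b
    by (metis transpose_def vec_lambda_beta)
  have ent: "(\<Sum>m\<in>UNIV. Th$k$m * W$m$l) = (if k = l then 1 else 0)" for k l
    using arg_cong[OF inv, of "\<lambda>M. M$k$l"] by (simp add: mm_entry mat_def)
  have Wjj: "W$j$j > 0"
  proof -
    define v where "v = (\<chi> m. W$m$j)"
    have Tv: "(Th *v v)$k = (if k = j then 1 else 0)" for k
      using ent[of k j] by (simp add: v_def matrix_vector_mult_def)
    have "v \<noteq> 0"
    proof
      assume "v = 0"
      then have "(Th *v v)$j = 0" by simp
      with Tv[of j] show False by simp
    qed
    then have "v \<bullet> (Th *v v) > 0" using pd by (simp add: pos_def_mat_def)
    moreover have "v \<bullet> (Th *v v) = W$j$j"
    proof -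
      have "\<And>i. v$i * (Th *v v)$i = (if i = j then W$j$j else 0)"
        by (subst Tv) (simp add: v_def)
      then show ?thesis unfolding inner_vec_def inner_real_def by simp
    qed
    ultimately show ?thesis by simp
  qed
  have F3: "(\<Sum>m\<in>?R. Th$k$m * A m l) = (if k = l then 1 else 0)" if "k \<noteq> j" "l \<noteq> j" for k l
  proof -
    have e1: "(\<Sum>m\<in>?R. Th$k$m * W$m$l) = (if k = l then 1 else 0) - Th$k$j * W$j$l"
      using ent[of k l] split_j[of "\<lambda>m. Th$k$m * W$m$l" j] by simp
    have e2: "(\<Sum>m\<in>?R. Th$k$m * W$m$j) = - Th$k$j * W$j$j"
      using ent[of k j] split_j[of "\<lambda>m. Th$k$m * W$m$j" j] that by simp
    have "(\<Sum>m\<in>?R. Th$k$m * A m l) = (\<Sum>m\<in>?R. Th$k$m * W$m$l) - (\<Sum>m\<in>?R. Th$k$m * W$m$j) * (W$l$j / W$j$j)"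
      by (simp add: A_def right_diff_distrib sum_subtractf sum_distrib_right mult.assoc sum_divide_distrib)
    also have "\<dots> = (if k = l then 1 else 0)"
      using e1 e2 Wjj Wsym[of j l] by simp
    finally show ?thesis .
  qed

  have F4: "(\<Sum>m\<in>?R. Th$k$m * Abeta m) = beta k" if "k \<noteq> j" for k
  proof -
    have "(\<Sum>m\<in>?R. Th$k$m * Abeta m) = (\<Sum>m\<in>?R. \<Sum>l\<in>?R. Th$k$m * A m l * beta l)"
      by (simp add: Abeta_def sum_distrib_left mult.assoc)
    also have "\<dots> = (\<Sum>l\<in>?R. \<Sum>m\<in>?R. Th$k$m * A m l * beta l)"
      by (rule sum.swap)
    also have "\<dots> = (\<Sum>l\<in>?R. (\<Sum>m\<in>?R. Th$k$m * A m l) * beta l)"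
      by (simp add: sum_distrib_right)
    also have "\<dots> = (\<Sum>l\<in>?R. (if k = l then beta l else 0))"
      by (rule sum.cong) (simp_all add: F3 that)
    also have "\<dots> = beta k" using that by simp
    finally show ?thesis .
  qed
  have F5: "q = (\<Sum>k\<in>?R. beta k * Abeta k)"
    by (simp add: q_def Abeta_def sum_distrib_left mult.assoc)
  have F6: "A k l = A l k" for k l
    unfolding A_def using Wsym[of k l] by (simp add: mult.commute)
  have F7: "(\<Sum>m\<in>?R. beta m * A m b) = Abeta b" for b
    unfolding Abeta_def by (rule sum.cong) (simp_all add: F6 mult.commute)
  have dval: "d = 1 / w22" by (simp add: d_def th22_def)
  have dpos: "d > 0" using dval w by simp
  have prod: "(Th' ** W')$a$b = mat 1 $a$b" for a b
  proof -
    have e: "(Th' ** W')$a$b = Th'$a$j * W'$j$b + (\<Sum>m\<in>?R. Th'$a$m * W'$m$b)"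
      by (simp add: mm_entry split_j[of _ j])
    show ?thesis
    proof (cases "a = j")
      case True
      note a = True
      show ?thesis
      proof (cases "b = j")
        case True
        have s: "(\<Sum>m\<in>?R. beta m * (- Abeta m / d)) = - q / d"
          by (simp add: F5 sum_divide_distrib sum_negf)
        have "(Th' ** W')$a$b = th22 * w22 + (\<Sum>m\<in>?R. beta m * (- Abeta m / d))"
          unfolding e using a True by (simp add: Th'_def W'_def)
        also have "\<dots> = 1" unfolding s using w by (simp add: dval th22_def field_simps)
        finally show ?thesis using a True by (simp add: mat_def)
      next
        case False
        have s: "(\<Sum>m\<in>?R. beta m * (A m b + Abeta m * Abeta b / d)) = Abeta b + q * Abeta b / d"
          by (simp add: F5 F7 sum.distrib distrib_left sum_divide_distrib sum_distrib_right mult.assoc)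
        have "(Th' ** W')$a$b = th22 * (- Abeta b / d) + (\<Sum>m\<in>?R. beta m * (A m b + Abeta m * Abeta b / d))"
          unfolding e using a False by (simp add: Th'_def W'_def)
        also have "\<dots> = 0" unfolding s using dpos by (simp add: d_def field_simps)
        finally show ?thesis using a False by (simp add: mat_def)
      qed
    next
      case False
      note a = False
      show ?thesis
      proof (cases "b = j")
        case True
        have s: "(\<Sum>m\<in>?R. Th$a$m * (- Abeta m / d)) = - beta a / d"
          using F4[OF a] by (simp add: sum_divide_distrib[symmetric] sum_negf)
        have "(Th' ** W')$a$b = beta a * w22 + (\<Sum>m\<in>?R. Th$a$m * (- Abeta m / d))"
          unfolding e using a True by (simp add: Th'_def W'_def)
        also have "\<dots> = 0" unfolding s using w by (simp add: dval)
        finally show ?thesis using a True by (simp add: mat_def)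
      next
        case False
        have s: "(\<Sum>m\<in>?R. Th$a$m * (A m b + Abeta m * Abeta b / d)) = (if a = b then 1 else 0) + beta a * Abeta b / d"
        proof -
          have h: "(\<Sum>m\<in>?R. Th$a$m * Abeta m * Abeta b / d) = (\<Sum>m\<in>?R. Th$a$m * Abeta m) * Abeta b / d"
            by (simp add: sum_distrib_right sum_divide_distrib)
          show ?thesis using F4[OF a] F3[OF a False] h
            by (simp add: sum.distrib distrib_left mult.assoc[symmetric])
        qed
        have "(Th' ** W')$a$b = beta a * (- Abeta b / d) + (\<Sum>m\<in>?R. Th$a$m * (A m b + Abeta m * Abeta b / d))"
          unfolding e using a False by (simp add: Th'_def W'_def)
        also have "\<dots> = (if a = b then 1 else 0)" unfolding s by simp
        finally show ?thesis using a False by (simp add: mat_def)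
      qed
    qed
  qed
  have P2: "Th' ** W' = mat 1" using prod by (simp add: vec_eq_iff)
  have symT: "transpose Th' = Th'"
    using Thsym by (auto simp add: vec_eq_iff transpose_def Th'_def)
  have pos: "x \<bullet> (Th' *v x) > 0" if "x \<noteq> 0" for x
  proof -
    define t where "t = x$j"
    define z where "z = (\<chi> k. if k = j then 0 else x$k + t * Abeta k)"
    have L: "x \<bullet> (Th' *v x) = t*th22*t + (\<Sum>b\<in>?R. t*beta b*x$b) + (\<Sum>a\<in>?R. x$a*beta a*t)
        + (\<Sum>a\<in>?R. \<Sum>b\<in>?R. x$a*Th$a$b*x$b)"
      by (simp add: qf split_j[of _ j] Th'_def t_def sum.distrib algebra_simps)
    have R0: "z \<bullet> (Th *v z) = (\<Sum>a\<in>?R. \<Sum>b\<in>?R. (x$a + t*Abeta a) * Th$a$b * (x$b + t*Abeta b))"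
      by (simp add: qf split_j[of _ j] z_def)
    have S2: "(\<Sum>a\<in>?R. \<Sum>b\<in>?R. x$a * Th$a$b * Abeta b) = (\<Sum>a\<in>?R. x$a * beta a)"
    proof -
      have "(\<Sum>a\<in>?R. \<Sum>b\<in>?R. x$a * Th$a$b * Abeta b) = (\<Sum>a\<in>?R. x$a * (\<Sum>b\<in>?R. Th$a$b * Abeta b))"
        by (simp add: sum_distrib_left mult.assoc)
      also have "\<dots> = (\<Sum>a\<in>?R. x$a * beta a)"
        by (rule sum.cong) (simp_all add: F4)
      finally show ?thesis .
    qed
    have S3: "(\<Sum>a\<in>?R. \<Sum>b\<in>?R. Abeta a * Th$a$b * x$b) = (\<Sum>a\<in>?R. x$a * beta a)"
    proof -
      have "(\<Sum>a\<in>?R. \<Sum>b\<in>?R. Abeta a * Th$a$b * x$b) = (\<Sum>b\<in>?R. \<Sum>a\<in>?R. Abeta a * Th$a$b * x$b)"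
        by (rule sum.swap)
      also have "\<dots> = (\<Sum>b\<in>?R. \<Sum>a\<in>?R. x$b * Th$b$a * Abeta a)"
        by (intro sum.cong refl) (metis Thsym mult.commute mult.left_commute)
      finally show ?thesis using S2 by simp
    qed
    have S4: "(\<Sum>a\<in>?R. \<Sum>b\<in>?R. Abeta a * Th$a$b * Abeta b) = q"
    proof -
      have "(\<Sum>a\<in>?R. \<Sum>b\<in>?R. Abeta a * Th$a$b * Abeta b) = (\<Sum>a\<in>?R. Abeta a * (\<Sum>b\<in>?R. Th$a$b * Abeta b))"
        by (simp add: sum_distrib_left mult.assoc)
      also have "\<dots> = (\<Sum>a\<in>?R. beta a * Abeta a)"
        by (rule sum.cong) (simp_all add: F4)
      finally show ?thesis using F5 by simp
    qed
    have R1: "z \<bullet> (Th *v z) = (\<Sum>a\<in>?R. \<Sum>b\<in>?R. x$a*Th$a$b*x$b) + t * (\<Sum>a\<in>?R. \<Sum>b\<in>?R. x$a * Th$a$b * Abeta b)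
       + t * (\<Sum>a\<in>?R. \<Sum>b\<in>?R. Abeta a * Th$a$b * x$b) + t*t*(\<Sum>a\<in>?R. \<Sum>b\<in>?R. Abeta a * Th$a$b * Abeta b)"
      unfolding R0 by (simp add: sum.distrib sum_distrib_left algebra_simps)
    have key: "x \<bullet> (Th' *v x) = z \<bullet> (Th *v z) + t*t/w22"
      unfolding L R1 S2 S3 S4 th22_def
      by (simp add: sum_distrib_left sum_distrib_right algebra_simps)
    have zge: "z \<bullet> (Th *v z) \<ge> 0"
      using pd unfolding pos_def_mat_def by (cases "z = 0") (auto intro: less_imp_le)
    show ?thesis
    proof (cases "t = 0")
      case True
      have "z = x" using True by (simp add: vec_eq_iff z_def t_def)
      then have "z \<bullet> (Th *v z) > 0" using pd that by (simp add: pos_def_mat_def)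
      then show ?thesis using key True by simp
    next
      case False
      have "t*t/w22 > 0" using False w by (intro divide_pos_pos) (auto simp add: zero_less_mult_iff linorder_neq_iff)
      then show ?thesis using key zge by simp
    qed
  qed
  show ?thesis using P2 symT pos by (simp add: pos_def_mat_def)
qed

definition binv :: "(real^'n^'n) \<times> (real^'n^'n) \<Rightarrow> bool" where
  "binv st \<longleftrightarrow> pos_def_mat (fst st) \<and> fst st ** snd st = mat 1"

lemma col_pd:
  assumes "binv st" and "S$j$j + 2 / nn * tau > 0"
  shows "binv (bagus_col_update nn S tau v0 v1 B P m j st)"
proof (cases st)
  case (Pair Th W)
  show ?thesis
    using assms unfolding Pair bagus_col_update_def Let_def fst_conv snd_conv binv_def
    by (intro core) auto
qed

lemma col_sym:
  assumes "sym_mat (fst st)"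
  shows "sym_mat (fst (bagus_col_update nn S tau v0 v1 B P m j st))"
proof -
  have "(fst st)$a$b = (fst st)$b$a" for a b
    using assms unfolding sym_mat_def by (metis transpose_def vec_lambda_beta)
  then show ?thesis
    unfolding bagus_col_update_def Let_def fst_conv sym_mat_def
    by (auto simp add: vec_eq_iff transpose_def)
qed

lemma fold_inv:
  assumes "\<And>j st. I st \<Longrightarrow> I (f j st)" and "I st"
  shows "I (fold f xs st)"
  using assms(2) by (induction xs arbitrary: st) (auto intro: assms(1))

theorem theorem5:
  fixes S Th0 :: "((real,'n::{finite,linorder}) vec,'n) vec"
    and n :: nat and v0 v1 eta tau B :: real
    and sweeps :: "nat \<Rightarrow> 'n \<Rightarrow> nat" and T :: nat
  assumes "pos_semidef_mat S"
    and "n > 0"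
    and "0 < v0" and "v0 < v1"
    and "0 < eta" and "eta < 1"
    and "tau > 0" and "B > 0"
    and "sym_mat Th0"
  shows "sym_mat (bagus_Theta n S v0 v1 eta tau B Th0 sweeps T)
     \<and> (pos_def_mat Th0 \<longrightarrow> pos_def_mat (bagus_Theta n S v0 v1 eta tau B Th0 sweeps T))"
proof
  show "sym_mat (bagus_Theta n S v0 v1 eta tau B Th0 sweeps T)"
    unfolding bagus_Theta_def
  proof (induction T)
    case 0
    then show ?case using assms(9) by simp
  next
    case (Suc T)
    show ?case
      unfolding bagus_run.simps bagus_iter_def Let_def
      by (rule fold_inv[where I = "\<lambda>st. sym_mat (fst st)"], erule col_sym, rule Suc.IH)
  qed
  show "pos_def_mat Th0 \<longrightarrow> pos_def_mat (bagus_Theta n S v0 v1 eta tau B Th0 sweeps T)"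
  proof
    assume pd0: "pos_def_mat Th0"
    have wpos: "S$j$j + 2 / real n * tau > 0" for j
    proof -
      have "axis j 1 \<bullet> (S *v axis j (1::real)) \<ge> 0"
        using assms(1) unfolding pos_semidef_mat_def by blast
      moreover have "axis j 1 \<bullet> (S *v axis j (1::real)) = S$j$j"
        by (simp add: inner_axis' matrix_vector_mult_basis column_def)
      moreover have "2 / real n * tau > 0" using assms(2,7) by simp
      ultimately show ?thesis by simp
    qed
    have "\<forall>x. Th0 *v x = 0 \<longrightarrow> x = 0"
      using pd0 unfolding pos_def_mat_def by (metis inner_zero_right less_irrefl)
    then have "invertible Th0"
      using matrix_left_invertible_ker invertible_left_inverse by blast
    then have "Th0 ** matrix_inv Th0 = mat 1"
      unfolding invertible_def matrix_inv_def by (rule someI_ex[THEN conjunct1])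
    then have b0: "binv (bagus_run n S v0 v1 eta tau B Th0 sweeps 0)"
      using pd0 by (simp add: binv_def)
    have "binv (bagus_run n S v0 v1 eta tau B Th0 sweeps T)"
    proof (induction T)
      case 0
      then show ?case using b0 .
    next
      case (Suc T)
      show ?case
        unfolding bagus_run.simps bagus_iter_def Let_def
        by (rule fold_inv[where I = binv], erule col_pd[OF _ wpos], rule Suc.IH)
    qed
    then show "pos_def_mat (bagus_Theta n S v0 v1 eta tau B Th0 sweeps T)"
      by (simp add: binv_def bagus_Theta_def)
  qed
qed

end
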